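(* Suppose $n \ge 2$ is an integer, $f : \mathbf R^{n-1} \to \mathbf R$ is of class $2$, $F : \mathbf R^{n-1} \to \mathbf R^n$ is given by $F(x) = (x, f(x))$, $C = \operatorname{im} F$, $0 < r \le \infty$, and $\|\mathbf b(C,c)\| \le r^{-1}$ for every $c \in C$. Let $\mathbf p : \mathbf R^n \to \mathbf R^{n-1}$ and $\mathbf q : \mathbf R^n \to \mathbf R$ be $\mathbf p(z_1,\dots,z_n) = (z_1,\dots,z_{n-1})$ and $\mathbf q(z_1,\dots,z_n) = z_n$. Then, whenever $z \in \mathbf R^n$ and $\operatorname{dist}(z,C) < r$, there exists a unique point $c \in C$ with $|z-c| = \operatorname{dist}(z,C)$; moreover, $\operatorname{sign}\mathbf q(z-c) = \operatorname{sign}(\mathbf q(z) - f(\mathbf p(z)))$.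
   Context: For a submanifold $M$ of class $2$ of $\mathbf R^n$ and $a \in M$, the second fundamental form $\mathbf b(M,a) : \operatorname{Tan}(M,a)\times\operatorname{Tan}(M,a) \to \operatorname{Nor}(M,a)$ is the unique bilinear form such that $v \bullet \langle w, \mathrm D g(a)\rangle = -g(a)\bullet \mathbf b(M,a)(v,w)$ for $v,w\in\operatorname{Tan}(M,a)$ whenever $g : M\to\mathbf R^n$ is of class $1$ with $g(x)\in \operatorname{Nor}(M,x)$ for $x\in M$. $\|\mathbf b(M,a)\|$ is its norm, $\sup\{|\mathbf b(M,a)(v,w)| : |v|,|w|\le 1\}$. Here $r^{-1}=0$ if $r=\infty$. *)

theory Defs
  imports "HOL-Analysis.Analysis"
begin

definition Tan :: "'b::euclidean_space set \<Rightarrow> 'b \<Rightarrow> 'b set" where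
  "Tan M a = {v. \<forall>e>0. \<exists>x\<in>M. \<exists>s>0. dist x a < e \<and> norm (s *\<^sub>R (x - a) - v) < e}"

definition Nor :: "'b::euclidean_space set \<Rightarrow> 'b \<Rightarrow> 'b set" where
  "Nor M a = {u. \<forall>v\<in>Tan M a. u \<bullet> v = 0}"

definition C1_on_with :: "'b::euclidean_space set \<Rightarrow> ('b \<Rightarrow> 'c::euclidean_space) \<Rightarrow> ('b \<Rightarrow> 'b \<Rightarrow>\<^sub>L 'c) \<Rightarrow> bool" where
  "C1_on_with U G G' \<longleftrightarrow> open U \<and> (\<forall>x\<in>U. (G has_derivative blinfun_apply (G' x)) (at x)) \<and> continuous_on U G'"

definition local_C1_ext :: "'b::euclidean_space set \<Rightarrow> ('b \<Rightarrow> 'c::euclidean_space) \<Rightarrow> 'b \<Rightarrow> 'b set \<Rightarrow> ('b \<Rightarrow> 'c) \<Rightarrow> ('b \<Rightarrow> 'b \<Rightarrow>\<^sub>L 'c) \<Rightarrow> bool" where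
  "local_C1_ext M g a U G G' \<longleftrightarrow> a \<in> U \<and> C1_on_with U G G' \<and> (\<forall>x\<in>M \<inter> U. G x = g x)"

definition class1_on :: "'b::euclidean_space set \<Rightarrow> ('b \<Rightarrow> 'c::euclidean_space) \<Rightarrow> bool" where
  "class1_on M g \<longleftrightarrow> (\<forall>a\<in>M. \<exists>U G G'. local_C1_ext M g a U G G')"

text \<open>beta is the second fundamental form b(M,a): a bilinear map Tan \<times> Tan \<rightarrow> Nor
  (extended by 0 outside Tan \<times> Tan) with  v \<bullet> <w, Dg(a)> = - g(a) \<bullet> beta(v,w)
  for every normal vector field g of class 1, where Dg(a) is computed via any local
  class-1 extension.\<close>
definition is_sff :: "'b::euclidean_space set \<Rightarrow> 'b \<Rightarrow> ('b \<Rightarrow> 'b \<Rightarrow> 'b) \<Rightarrow> bool" where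
  "is_sff M a \<beta> \<longleftrightarrow>
     (\<forall>v w. (v \<notin> Tan M a \<or> w \<notin> Tan M a) \<longrightarrow> \<beta> v w = 0) \<and>
     (\<forall>v\<in>Tan M a. \<forall>w\<in>Tan M a. \<beta> v w \<in> Nor M a) \<and>
     (\<forall>v\<in>Tan M a. \<forall>w1\<in>Tan M a. \<forall>w2\<in>Tan M a. \<forall>c::real.
        \<beta> v (w1 + c *\<^sub>R w2) = \<beta> v w1 + c *\<^sub>R \<beta> v w2 \<and>
        \<beta> (w1 + c *\<^sub>R w2) v = \<beta> w1 v + c *\<^sub>R \<beta> w2 v) \<and>
     (\<forall>g. class1_on M g \<and> (\<forall>x\<in>M. g x \<in> Nor M x) \<longrightarrow>
        (\<forall>U G G'. local_C1_ext M g a U G G' \<longrightarrow>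
           (\<forall>v\<in>Tan M a. \<forall>w\<in>Tan M a. v \<bullet> blinfun_apply (G' a) w = - (g a \<bullet> \<beta> v w))))"

definition sff :: "'b::euclidean_space set \<Rightarrow> 'b \<Rightarrow> 'b \<Rightarrow> 'b \<Rightarrow> 'b" where
  "sff M a = (THE \<beta>. is_sff M a \<beta>)"

definition sff_norm :: "'b::euclidean_space set \<Rightarrow> 'b \<Rightarrow> real" where
  "sff_norm M a = (SUP p\<in>{(v,w). v \<in> Tan M a \<and> w \<in> Tan M a \<and> norm v \<le> 1 \<and> norm w \<le> 1}.
                     norm (sff M a (fst p) (snd p)))"

definition class2 :: "('a::euclidean_space \<Rightarrow> real) \<Rightarrow> bool" where
  "class2 f \<longleftrightarrow> (\<exists>f' f''. (\<forall>x. (f has_derivative blinfun_apply (f' x)) (at x)) \<and>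
                          (\<forall>x. (f' has_derivative blinfun_apply (f'' x)) (at x)) \<and>
                          continuous_on UNIV f'')"

end

theory Submission
  imports Defs
begin

lemma proper_closed_image:
  fixes \<psi> :: "'a::euclidean_space \<Rightarrow> 'a"
  assumes cont: "continuous_on UNIV \<psi>" and disp: "\<And>x. norm (\<psi> x - x) \<le> K"
    and S: "closed S"
  shows "closed (\<psi> ` S)"
proof (clarsimp simp: closed_sequential_limits)
  fix s l assume sS: "\<forall>n. s n \<in> \<psi> ` S" and lim: "s \<longlonglongrightarrow> l"
  define T where "T = S \<inter> \<psi> -` cball l 1"
  have "closed T" unfolding T_def
    using S cont by (intro closed_Int closed_vimage) auto
  moreover have "bounded T"
  proof -
    have "T \<subseteq> cball l (1 + K)"
    proof
      fix x assume "x \<in> T"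
      then have "dist l (\<psi> x) \<le> 1" by (auto simp: T_def)
      moreover have "dist (\<psi> x) x \<le> K" using disp by (simp add: dist_norm)
      ultimately show "x \<in> cball l (1 + K)" using dist_triangle[of l x "\<psi> x"] by simp
    qed
    then show ?thesis using bounded_cball bounded_subset by blast
  qed
  ultimately have "compact T" by (simp add: compact_eq_bounded_closed)
  then have "compact (\<psi> ` T)" using cont by (meson compact_continuous_image continuous_on_subset subset_UNIV)
  then have cl: "closed (\<psi> ` T)" by (simp add: compact_imp_closed)
  have "eventually (\<lambda>n. s n \<in> \<psi> ` T) sequentially"
  proof -
    have "eventually (\<lambda>n. dist (s n) l < 1) sequentially"
      using lim by (simp add: tendstoD)
    then show ?thesis
      apply eventually_elim
      using sS unfolding T_def by (force simp: dist_commute)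
  qed
  then have "l \<in> \<psi> ` T" using Lim_in_closed_set[OF cl _ _ lim] by auto
  then show "l \<in> \<psi> ` S" unfolding T_def by auto
qed

lemma local_homeo_bounded_disp_inj:
  fixes \<psi> :: "'a::euclidean_space \<Rightarrow> 'a"
  assumes loc: "\<And>x. \<exists>U V g. open U \<and> x \<in> U \<and> open V \<and> homeomorphism U V \<psi> g"
    and disp: "\<And>x. norm (\<psi> x - x) \<le> K"
  shows "inj \<psi>"
proof -
  have cont: "continuous_on UNIV \<psi>"
  proof (rule continuous_at_imp_continuous_on, rule ballI)
    fix x
    obtain U V g where "open U" "x \<in> U" "open V" "homeomorphism U V \<psi> g" using loc by blast
    then show "isCont \<psi> x"
      using homeomorphism_cont1 continuous_on_eq_continuous_at by blast
  qed
  have opim: "open (\<psi> ` S)" if "open S" for S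
  proof (subst open_subopen, rule ballI)
    fix y assume "y \<in> \<psi> ` S"
    then obtain x where x: "x \<in> S" "y = \<psi> x" by auto
    obtain U V g where UV: "open U" "x \<in> U" "open V" "homeomorphism U V \<psi> g" using loc by blast
    have "openin (top_of_set V) (\<psi> ` (S \<inter> U))"
      by (rule homeomorphism_imp_open_map[OF UV(4)])
        (unfold openin_open, rule exI[of _ S], use \<open>open S\<close> in auto)
    then have "open (\<psi> ` (S \<inter> U))" using UV(3) by (rule openin_open_trans)
    then show "\<exists>T. open T \<and> y \<in> T \<and> T \<subseteq> \<psi> ` S" using x UV(2) by blast
  qed
  have clim: "closed (\<psi> ` S)" if "closed S" for S
    using proper_closed_image[OF cont disp that] .
  have surj: "\<psi> ` UNIV = UNIV"
  proof -
    have o: "open (\<psi> ` UNIV)" by (rule opim) simp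
    have c: "closed (\<psi> ` UNIV)" by (rule clim) simp
    have *: "\<forall>T. openin (top_of_set UNIV) T \<and> closedin (top_of_set UNIV) T \<longrightarrow> T = {} \<or> T = (UNIV::'a set)"
      using connected_UNIV[where 'a='a] unfolding connected_clopen .
    have "\<psi> ` UNIV = {} \<or> \<psi> ` UNIV = UNIV"
      using *[rule_format, of "\<psi> ` UNIV"] o c by simp
    then show ?thesis by blast
  qed
  have cov: "covering_space UNIV \<psi> UNIV"
  proof (rule covering_spaceI)
    show "continuous_on UNIV \<psi>" by (rule cont)
    show "\<psi> ` UNIV = UNIV" by (rule surj)
    fix y :: 'a
    define P where "P = \<psi> -` {y}"
    have "closed P" unfolding P_def using cont closed_vimage by blast
    moreover have "bounded P"
    proof -
      have "P \<subseteq> cball y K"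
      proof
        fix x assume "x \<in> P"
        then have "\<psi> x = y" by (simp add: P_def)
        then show "x \<in> cball y K" using disp[of x] by (simp add: dist_norm norm_minus_commute)
      qed
      then show ?thesis using bounded_cball bounded_subset by blast
    qed
    ultimately have cP: "compact P" by (simp add: compact_eq_bounded_closed)
    define LU where "LU x = (SOME U. \<exists>V g. open U \<and> x \<in> U \<and> open V \<and> homeomorphism U V \<psi> g)" for x
    have LU: "\<exists>V g. open (LU x) \<and> x \<in> LU x \<and> open V \<and> homeomorphism (LU x) V \<psi> g" for x
      unfolding LU_def using someI_ex[OF loc[of x]] .
    have injLU: "inj_on \<psi> (LU x)" for x
    proof -
      obtain V g where "homeomorphism (LU x) V \<psi> g" using LU[of x] by blast
      then show ?thesis by (intro inj_on_inverseI[where g=g]) (rule homeomorphism_apply1)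
    qed
    have LUo: "open (LU x)" and LUx: "x \<in> LU x" for x using LU[of x] by blast+
    have fin: "finite P"
    proof -
      have "P \<subseteq> (\<Union>x\<in>P. LU x)" using LUx by blast
      then obtain D where D: "D \<subseteq> P" "finite D" "P \<subseteq> (\<Union>x\<in>D. LU x)"
        using compactE_image[OF cP, where C=P and f=LU] LUo by blast
      have "P \<subseteq> D"
      proof
        fix p assume "p \<in> P"
        then obtain x where "x \<in> D" "p \<in> LU x" using D by auto
        moreover have "\<psi> x = \<psi> p" using \<open>x \<in> D\<close> \<open>p \<in> P\<close> D(1) by (auto simp: P_def)
        ultimately have "p = x" using injLU[of x] LUx[of x] by (simp add: inj_on_eq_iff)
        then show "p \<in> D" using \<open>x \<in> D\<close> by simp
      qed
      then show ?thesis using D(2) finite_subset by blast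
    qed
    define DD where "DD = (\<lambda>(a,b). dist a b / 2) ` {(a,b) \<in> P \<times> P. a \<noteq> b}"
    define \<delta> where "\<delta> = Min (insert 1 DD)"
    have finD: "finite DD"
    proof -
      have "finite (P \<times> P)" using fin by simp
      then have "finite {(a,b) \<in> P \<times> P. a \<noteq> b}" by (rule finite_subset[rotated]) auto
      then show ?thesis unfolding DD_def by (rule finite_imageI)
    qed
    have DDpos: "\<forall>d\<in>DD. 0 < d" unfolding DD_def by auto
    have dpos: "\<delta> > 0" unfolding \<delta>_def using finD DDpos by (subst Min_gr_iff) auto
    have dle: "\<delta> \<le> dist a b / 2" if "a \<in> P" "b \<in> P" "a \<noteq> b" for a b
    proof -
      have "dist a b / 2 \<in> DD" unfolding DD_def using that by force
      then show ?thesis unfolding \<delta>_def using finD by (intro Min_le) auto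
    qed
    define U' where "U' x = LU x \<inter> ball x \<delta>" for x
    have U'open: "open (U' x)" for x using LU[of x] by (auto simp: U'_def)
    have U'disj: "U' a \<inter> U' b = {}" if "a \<in> P" "b \<in> P" "a \<noteq> b" for a b
    proof -
      have "ball a \<delta> \<inter> ball b \<delta> = {}"
      proof (rule ccontr)
        assume "ball a \<delta> \<inter> ball b \<delta> \<noteq> {}"
        then obtain w where "dist a w < \<delta>" "dist b w < \<delta>" by auto
        then show False using dle[OF that] dist_triangle[of a b w] by (simp add: dist_commute)
      qed
      then show ?thesis by (auto simp: U'_def)
    qed
    have U'hom: "\<exists>g. homeomorphism (U' x) (\<psi> ` U' x) \<psi> g \<and> open (\<psi> ` U' x)" for x
    proof -
      obtain V g where "open (LU x)" "open V" "homeomorphism (LU x) V \<psi> g" using LU[of x] by blast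
      moreover have "\<psi> ` U' x \<subseteq> V" using \<open>homeomorphism (LU x) V \<psi> g\<close>
        unfolding homeomorphism_def U'_def by blast
      ultimately have h: "homeomorphism (U' x) (\<psi> ` U' x) \<psi> g"
        using homeomorphism_of_subsets[of "LU x" V \<psi> g "U' x" "\<psi> ` U' x"] by (auto simp: U'_def)
      then show ?thesis using opim U'open by blast
    qed
    define T where "T = (\<Inter>x\<in>P. \<psi> ` U' x) - \<psi> ` (UNIV - (\<Union>x\<in>P. U' x))"
    have yT: "y \<in> T"
    proof -
      have "y \<in> \<psi> ` U' x" if "x \<in> P" for x
      proof -
        have "x \<in> U' x" using LUx[of x] dpos by (simp add: U'_def)
        moreover have "\<psi> x = y" using that by (simp add: P_def)
        ultimately show ?thesis by blast
      qed
      moreover have "y \<notin> \<psi> ` (UNIV - (\<Union>x\<in>P. U' x))"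
      proof
        assume "y \<in> \<psi> ` (UNIV - (\<Union>x\<in>P. U' x))"
        then obtain w where w: "\<psi> w = y" "w \<notin> (\<Union>x\<in>P. U' x)" by blast
        have "w \<in> U' w" using LUx[of w] dpos by (simp add: U'_def)
        moreover have "w \<in> P" using w(1) by (simp add: P_def)
        ultimately show False using w(2) by blast
      qed
      ultimately show ?thesis unfolding T_def by blast
    qed
    have Topen: "open T"
    proof -
      have "open (\<Inter>x\<in>P. \<psi> ` U' x)" using fin U'hom by (intro open_INT) auto
      moreover have "closed (\<psi> ` (UNIV - (\<Union>x\<in>P. U' x)))"
        by (rule clim) (intro closed_Diff closed_UNIV open_UN ballI U'open)
      ultimately show ?thesis unfolding T_def by (rule open_Diff)
    qed
    define v where "v = (\<lambda>x. U' x \<inter> \<psi> -` T) ` P"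
    have preT: "\<psi> -` T \<subseteq> (\<Union>x\<in>P. U' x)"
    proof
      fix w assume "w \<in> \<psi> -` T"
      then have "\<psi> w \<in> T" by simp
      show "w \<in> (\<Union>x\<in>P. U' x)"
      proof (rule ccontr)
        assume "w \<notin> (\<Union>x\<in>P. U' x)"
        then have "\<psi> w \<in> \<psi> ` (UNIV - (\<Union>x\<in>P. U' x))" by blast
        then show False using \<open>\<psi> w \<in> T\<close> unfolding T_def by blast
      qed
    qed
    have Uv: "\<Union>v = UNIV \<inter> \<psi> -` T"
    proof -
      have "\<Union>v = (\<Union>x\<in>P. U' x) \<inter> \<psi> -` T" unfolding v_def by auto
      then show ?thesis using preT by auto
    qed
    have opT: "open (\<psi> -` T)" using cont Topen continuous_on_open_vimage[OF open_UNIV, of \<psi>] by auto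
    have vopen: "\<forall>u\<in>v. openin (top_of_set UNIV) u"
    proof
      fix u assume "u \<in> v"
      then obtain x where "u = U' x \<inter> \<psi> -` T" unfolding v_def by blast
      then have "open u" using U'open[of x] opT by (simp add: open_Int)
      then show "openin (top_of_set UNIV) u" by simp
    qed
    have vdisj: "pairwise disjnt v" unfolding v_def
    proof (rule pairwise_imageI)
      fix a b assume "a \<in> P" "b \<in> P" "a \<noteq> b"
      then have "U' a \<inter> U' b = {}" by (rule U'disj)
      then show "disjnt (U' a \<inter> \<psi> -` T) (U' b \<inter> \<psi> -` T)" unfolding disjnt_def by blast
    qed
    have vhom: "\<forall>u\<in>v. \<exists>q. homeomorphism u T \<psi> q"
    proof
      fix u assume "u \<in> v"
      then obtain x where x: "x \<in> P" "u = U' x \<inter> \<psi> -` T" unfolding v_def by blast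
      obtain g where g: "homeomorphism (U' x) (\<psi> ` U' x) \<psi> g" using U'hom by blast
      have TU: "T \<subseteq> \<psi> ` U' x" using x(1) unfolding T_def by blast
      then have im: "\<psi> ` u = T" using x(2) by blast
      have "u \<subseteq> U' x" using x(2) by blast
      then have "homeomorphism u T \<psi> g"
        by (rule homeomorphism_of_subsets[OF g _ TU im])
      then show "\<exists>q. homeomorphism u T \<psi> q" by blast
    qed
    show "\<exists>T. y \<in> T \<and> openin (top_of_set UNIV) T \<and>
             (\<exists>v. \<Union>v = UNIV \<inter> \<psi> -` T \<and> (\<forall>u\<in>v. openin (top_of_set UNIV) u) \<and>
                  pairwise disjnt v \<and> (\<forall>u\<in>v. \<exists>q. homeomorphism u T \<psi> q))"
      apply (rule exI[of _ T])
      apply (intro conjI yT)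
       apply (simp add: Topen)
      apply (rule exI[of _ v])
      apply (intro conjI Uv vopen vdisj vhom)
      done
  qed
  show "inj \<psi>"
  proof (rule injI)
    fix a b assume ab: "\<psi> a = \<psi> b"
    have p1: "path (\<psi> \<circ> linepath a b)"
      by (rule path_continuous_image) (auto intro: continuous_on_subset[OF cont])
    have p2: "path (\<psi> \<circ> linepath a a)"
      by (rule path_continuous_image) (auto intro: continuous_on_subset[OF cont])
    have hom: "homotopic_paths UNIV (\<psi> \<circ> linepath a b) (\<psi> \<circ> linepath a a)"
      by (rule homotopic_paths_linear[OF p1 p2]) (simp_all add: pathstart_compose pathfinish_compose ab)
    have "pathfinish (linepath a b) = pathfinish (linepath a a)"
      by (rule covering_space_monodromy[OF cov p1 _ p2 _ hom]) auto
    then show "a = b" by simp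
  qed
qed

lemma sqrt_comp_deriv:
  assumes "(Q has_derivative D) (at x)" "0 < Q x"
  shows "((\<lambda>x. sqrt (Q x)) has_derivative (\<lambda>h. D h / (2 * sqrt (Q x)))) (at x)"
  using assms by (auto intro!: derivative_eq_intros simp: field_simps)

lemma deriv_zero_on_Tan:
  fixes K :: "'b::euclidean_space \<Rightarrow> 'c::real_normed_vector"
  assumes K: "(K has_derivative K') (at a)" and U: "open U" "a \<in> U"
    and Kz: "\<And>y. y \<in> M \<Longrightarrow> y \<in> U \<Longrightarrow> K y = 0" and aM: "a \<in> M"
    and w: "w \<in> Tan M a"
  shows "K' w = 0"
proof (rule ccontr)
  assume ne: "K' w \<noteq> 0"
  define \<eta> where "\<eta> = norm (K' w)"
  have \<eta>: "\<eta> > 0" using ne by (simp add: \<eta>_def)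
  have bl: "bounded_linear K'" using K has_derivative_bounded_linear by blast
  obtain B where B: "B > 0" "\<And>h. norm (K' h) \<le> norm h * B"
    using bounded_linear.pos_bounded[OF bl] by blast
  define \<epsilon> where "\<epsilon> = \<eta> / (4 * (norm w + 1))"
  have wp: "norm w + 1 > 0" by (smt (verit) norm_ge_zero)
  have \<epsilon>: "\<epsilon> > 0" using \<eta> wp by (simp add: \<epsilon>_def)
  obtain d where d: "d > 0" "\<And>y. norm (y - a) < d \<Longrightarrow> norm (K y - K a - K' (y - a)) \<le> \<epsilon> * norm (y - a)"
    using K \<epsilon> unfolding has_derivative_at_alt by blast
  obtain \<rho> where \<rho>: "\<rho> > 0" "ball a \<rho> \<subseteq> U" using U open_contains_ball by blast
  define e where "e = min (min d \<rho>) (min 1 (\<eta> / (4 * B)))"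
  have e: "e > 0" using d \<rho> \<eta> B by (simp add: e_def)
  obtain y s where ys: "y \<in> M" "s > 0" "dist y a < e" "norm (s *\<^sub>R (y - a) - w) < e"
    using w e unfolding Tan_def by blast
  have yU: "y \<in> U" using ys(3) \<rho> e_def by (auto simp: dist_commute)
  have Ky: "K y = 0" "K a = 0" using Kz ys(1) yU aM U(2) by auto
  have ya: "norm (y - a) < d" using ys(3) e_def by (simp add: dist_norm)
  have 1: "norm (K' (y - a)) \<le> \<epsilon> * norm (y - a)" using d(2)[OF ya] Ky by simp
  have sy: "s * norm (y - a) \<le> norm w + 1"
  proof -
    have "s * norm (y - a) = norm (s *\<^sub>R (y - a))" using ys(2) by simp
    also have "\<dots> \<le> norm (s *\<^sub>R (y - a) - w) + norm w"
      using norm_triangle_ineq[of "s *\<^sub>R (y - a) - w" w] by simp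
    finally show ?thesis using ys(4) e_def by linarith
  qed
  have 2: "norm (K' (s *\<^sub>R (y - a))) \<le> \<eta> / 4"
  proof -
    have "norm (K' (s *\<^sub>R (y - a))) = s * norm (K' (y - a))"
      using ys(2) by (simp add: linear_scale[OF bounded_linear.linear[OF bl]])
    also have "\<dots> \<le> s * (\<epsilon> * norm (y - a))" using 1 ys(2) by (intro mult_left_mono) auto
    also have "\<dots> = \<epsilon> * (s * norm (y - a))" by simp
    also have "\<dots> \<le> \<epsilon> * (norm w + 1)" using sy \<epsilon> by (intro mult_left_mono) auto
    also have "\<dots> = \<eta> / 4"
    proof -
      have "4 * norm w + 4 > 0" using wp by simp
      then show ?thesis using wp by (simp add: \<epsilon>_def field_simps)
    qed
    finally show ?thesis .
  qed
  have 3: "norm (K' (w - s *\<^sub>R (y - a))) \<le> \<eta> / 4"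
  proof -
    have "norm (K' (w - s *\<^sub>R (y - a))) \<le> norm (w - s *\<^sub>R (y - a)) * B" by (rule B(2))
    also have "\<dots> \<le> e * B" using ys(4) B by (intro mult_right_mono) (auto simp: norm_minus_commute)
    also have "\<dots> \<le> \<eta> / (4 * B) * B" using B e_def by (intro mult_right_mono) auto
    also have "\<dots> = \<eta> / 4" using B by simp
    finally show ?thesis .
  qed
  have "K' w = K' (s *\<^sub>R (y - a)) + K' (w - s *\<^sub>R (y - a))"
    by (simp add: linear_diff[OF bounded_linear.linear[OF bl]])
  then have "\<eta> \<le> norm (K' (s *\<^sub>R (y - a))) + norm (K' (w - s *\<^sub>R (y - a)))"
    unfolding \<eta>_def by (metis norm_triangle_ineq)
  then show False using 2 3 \<eta> by linarith
qed

locale graphC2 =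
  fixes f :: "'a::euclidean_space \<Rightarrow> real"
    and f' :: "'a \<Rightarrow> 'a \<Rightarrow>\<^sub>L real"
    and f'' :: "'a \<Rightarrow> 'a \<Rightarrow>\<^sub>L 'a \<Rightarrow>\<^sub>L real"
  assumes df: "\<And>x. (f has_derivative blinfun_apply (f' x)) (at x)"
    and ddf: "\<And>x. (f' has_derivative blinfun_apply (f'' x)) (at x)"
    and cf'': "continuous_on UNIV f''"
begin

definition gr :: "'a \<Rightarrow> 'a" where "gr x = (\<Sum>i\<in>Basis. blinfun_apply (f' x) i *\<^sub>R i)"
definition Dgr :: "'a \<Rightarrow> 'a \<Rightarrow> 'a" where "Dgr x h = (\<Sum>i\<in>Basis. blinfun_apply (blinfun_apply (f'' x) h) i *\<^sub>R i)"
definition W :: "'a \<Rightarrow> real" where "W x = sqrt (1 + gr x \<bullet> gr x)"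
definition nn :: "'a \<Rightarrow> 'a \<times> real" where "nn x = inverse (W x) *\<^sub>R (- gr x, 1)"
definition Dnn :: "'a \<Rightarrow> 'a \<Rightarrow> 'a \<times> real" where
  "Dnn x h = inverse (W x) *\<^sub>R (- Dgr x h, 0) - ((gr x \<bullet> Dgr x h) / (W x)^3) *\<^sub>R (- gr x, 1)"

lemma f'_gr: "blinfun_apply (f' x) h = gr x \<bullet> h"
proof -
  have "blinfun_apply (f' x) h = blinfun_apply (f' x) (\<Sum>i\<in>Basis. (h \<bullet> i) *\<^sub>R i)"
    by (simp add: euclidean_representation)
  also have "\<dots> = (\<Sum>i\<in>Basis. (h \<bullet> i) * blinfun_apply (f' x) i)"
    by (simp add: blinfun.sum_right blinfun.scaleR_right)
  also have "\<dots> = gr x \<bullet> h"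
    unfolding gr_def inner_sum_left by (auto intro!: sum.cong simp: inner_commute)
  finally show ?thesis .
qed

lemma W_sq: "(W x)^2 = 1 + gr x \<bullet> gr x"
  unfolding W_def using inner_ge_zero[of "gr x"] by simp
lemma W_ge1: "W x \<ge> 1"
  unfolding W_def using inner_ge_zero[of "gr x"] by simp
lemma W_pos: "W x > 0" using W_ge1[of x] by simp
lemma W_nz[simp]: "W x \<noteq> 0" using W_pos[of x] by simp

lemma gr_deriv: "(gr has_derivative Dgr x) (at x)"
  unfolding gr_def[abs_def] Dgr_def[abs_def]
  by (rule derivative_eq_intros ddf refl | simp)+

lemma W_deriv: "(W has_derivative (\<lambda>h. (gr x \<bullet> Dgr x h) / W x)) (at x)"
proof -
  have 1: "((\<lambda>x. 1 + gr x \<bullet> gr x) has_derivative (\<lambda>h. 2 * (gr x \<bullet> Dgr x h))) (at x)"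
    by (rule derivative_eq_intros gr_deriv refl | simp add: inner_commute)+
  have 2: "0 < 1 + gr x \<bullet> gr x" using inner_ge_zero[of "gr x"] by linarith
  show ?thesis unfolding W_def[abs_def]
    using sqrt_comp_deriv[OF 1 2] by simp
qed

lemma nn_deriv: "(nn has_derivative Dnn x) (at x)"
proof -
  have "((\<lambda>x. inverse (W x)) has_derivative (\<lambda>h. - (inverse (W x) * ((gr x \<bullet> Dgr x h) / W x) * inverse (W x)))) (at x)"
    using W_pos[of x] by (auto intro!: derivative_eq_intros W_deriv)
  moreover have "((\<lambda>x. (- gr x, 1::real)) has_derivative (\<lambda>h. (- Dgr x h, 0))) (at x)"
    by (intro has_derivative_Pair has_derivative_minus gr_deriv has_derivative_const)
  ultimately have "(nn has_derivative (\<lambda>h. inverse (W x) *\<^sub>R (- Dgr x h, 0) + (- (inverse (W x) * ((gr x \<bullet> Dgr x h) / W x) * inverse (W x))) *\<^sub>R (- gr x, 1))) (at x)"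
    unfolding nn_def[abs_def]
    by (rule has_derivative_scaleR)
  moreover have "(\<lambda>h. inverse (W x) *\<^sub>R (- Dgr x h, 0) + (- (inverse (W x) * ((gr x \<bullet> Dgr x h) / W x) * inverse (W x))) *\<^sub>R (- gr x, 1)) = Dnn x"
    unfolding Dnn_def by (auto simp: power3_eq_cube field_simps)
  ultimately show ?thesis by simp
qed

lemma Dnn_linear: "bounded_linear (Dnn x)"
  using nn_deriv has_derivative_bounded_linear by blast

lemma cont_f': "continuous_on UNIV f'"
  using ddf has_derivative_continuous continuous_at_imp_continuous_on by blast

lemma cont_gr: "continuous_on UNIV gr"
  unfolding gr_def[abs_def]
  by (intro continuous_intros continuous_on_blinfun_matrix cont_f')

lemma cont_Dgr: "continuous_on UNIV (\<lambda>x. Dgr x h)"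
  unfolding Dgr_def[abs_def]
  using cf'' by (intro continuous_intros) auto

lemma cont_W: "continuous_on UNIV W"
  unfolding W_def[abs_def] by (intro continuous_intros cont_gr)

lemma cont_Dnn: "continuous_on UNIV (\<lambda>x. Dnn x h)"
  unfolding Dnn_def
  by (intro continuous_intros cont_gr cont_Dgr cont_W) auto

lemma Q_pos: "0 < 1 + gr x \<bullet> gr x" using inner_ge_zero[of "gr x"] by linarith

lemma nn_nn: "nn x \<bullet> nn x = 1"
proof -
  have "nn x \<bullet> nn x = (inverse (W x))^2 * (gr x \<bullet> gr x + 1)"
    by (simp add: nn_def power2_eq_square algebra_simps)
  also have "\<dots> = 1" using W_sq[of x] W_nz[of x] Q_pos[of x] by (simp add: field_simps)
  finally show ?thesis .
qed

lemma norm_nn: "norm (nn x) = 1"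
  using nn_nn[of x] by (simp add: norm_eq_sqrt_inner)

lemma nn_Dnn: "nn x \<bullet> Dnn x h = 0"
proof -
  have "nn x \<bullet> Dnn x h = inverse (W x) * (inverse (W x) * (gr x \<bullet> Dgr x h)) - inverse (W x) * ((gr x \<bullet> Dgr x h) / W x ^ 3 * (gr x \<bullet> gr x + 1))"
    by (simp add: nn_def Dnn_def inner_diff_right field_simps)
  also have "\<dots> = inverse (W x) * (inverse (W x) * (gr x \<bullet> Dgr x h)) - inverse (W x) * ((gr x \<bullet> Dgr x h) / W x ^ 3 * (W x)^2)"
    using W_sq[of x] by simp
  also have "\<dots> = 0" using W_nz[of x] by (simp add: field_simps power2_eq_square power3_eq_cube)
  finally show ?thesis .
qed

lemma perp_nn: "p \<bullet> nn x = 0 \<longleftrightarrow> snd p = gr x \<bullet> fst p"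
  using W_pos[of x] unfolding nn_def
  by (cases p) (auto simp: inner_commute field_simps)

lemma snd_nn: "snd (nn x) = inverse (W x)" and fst_nn: "fst (nn x) = - (inverse (W x)) *\<^sub>R gr x"
  unfolding nn_def by auto

definition Fm :: "'a \<Rightarrow> 'a \<times> real" where "Fm x = (x, f x)"
definition CC :: "('a \<times> real) set" where "CC = range Fm"

lemma Tan_sub:
  assumes v: "v \<in> Tan CC (Fm x)"
  shows "snd v = gr x \<bullet> fst v"
proof (rule ccontr)
  assume ne: "snd v \<noteq> gr x \<bullet> fst v"
  define d0 where "d0 = \<bar>snd v - gr x \<bullet> fst v\<bar>"
  have d0: "d0 > 0" using ne by (simp add: d0_def)
  define \<epsilon> where "\<epsilon> = d0 / (4 * (norm (fst v) + 1))"
  have \<epsilon>: "\<epsilon> > 0" unfolding \<epsilon>_def by (rule divide_pos_pos[OF d0]) (smt (verit) norm_ge_zero)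
  obtain d where d: "d > 0" "\<And>y. norm (y - x) < d \<Longrightarrow> \<bar>f y - f x - gr x \<bullet> (y - x)\<bar> \<le> \<epsilon> * norm (y - x)"
    using df[of x] \<epsilon> unfolding has_derivative_at_alt f'_gr by (metis real_norm_def)
  define e where "e = min d (min 1 (d0 / (4 * (1 + norm (gr x)))))"
  have e: "e > 0" using d d0 by (simp add: e_def add_pos_nonneg)
  obtain p s where p: "p \<in> CC" "s > 0" "dist p (Fm x) < e" "norm (s *\<^sub>R (p - Fm x) - v) < e"
    using v e unfolding Tan_def by blast
  obtain y where y: "p = Fm y" using p(1) unfolding CC_def by blast
  have yx: "norm (y - x) < e"
    using p(3) norm_fst_le[of "y - x" "f y - f x"] by (simp add: y Fm_def dist_norm)
  have "norm (s *\<^sub>R (y - x) - fst v) < e"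
    using p(4) norm_fst_le[where x="s *\<^sub>R (y - x) - fst v" and y="s * (f y - f x) - snd v"]
    by (cases v) (simp add: y Fm_def)
  have 1: "\<bar>s * (f y - f x) - snd v\<bar> < e"
    using p(4) norm_snd_le[where x="s *\<^sub>R (y - x) - fst v" and y="s * (f y - f x) - snd v"]
    by (cases v) (simp add: y Fm_def)
  have 2: "norm (s *\<^sub>R (y - x) - fst v) < e"
    using p(4) norm_fst_le[where x="s *\<^sub>R (y - x) - fst v" and y="s * (f y - f x) - snd v"]
    by (cases v) (simp add: y Fm_def)
  have sy: "s * norm (y - x) \<le> norm (fst v) + 1"
  proof -
    have "s * norm (y - x) = norm (s *\<^sub>R (y - x))" using p(2) by simp
    also have "\<dots> \<le> norm (s *\<^sub>R (y - x) - fst v) + norm (fst v)"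
      using norm_triangle_ineq[of "s *\<^sub>R (y - x) - fst v" "fst v"] by simp
    finally show ?thesis using 2 e_def by linarith
  qed
  have 3: "\<bar>s * (f y - f x) - s * (gr x \<bullet> (y - x))\<bar> \<le> d0 / 4"
  proof -
    have "\<bar>s * (f y - f x) - s * (gr x \<bullet> (y - x))\<bar> = s * \<bar>f y - f x - gr x \<bullet> (y - x)\<bar>"
      using p(2) by (simp add: abs_mult right_diff_distrib[symmetric])
    also have "\<dots> \<le> s * (\<epsilon> * norm (y - x))"
      using d(2)[of y] yx e_def p(2) by (intro mult_left_mono) auto
    also have "\<dots> = \<epsilon> * (s * norm (y - x))" by simp
    also have "\<dots> \<le> \<epsilon> * (norm (fst v) + 1)" using sy \<epsilon> by (intro mult_left_mono) auto
    also have "\<dots> = d0 / 4"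
    proof -
      have "norm (fst v) + 1 > 0" by (smt (verit) norm_ge_zero)
      then show ?thesis unfolding \<epsilon>_def by (simp add: field_simps)
    qed
    finally show ?thesis .
  qed
  have 4: "\<bar>s * (gr x \<bullet> (y - x)) - gr x \<bullet> fst v\<bar> \<le> norm (gr x) * e"
  proof -
    have "\<bar>s * (gr x \<bullet> (y - x)) - gr x \<bullet> fst v\<bar> = \<bar>gr x \<bullet> (s *\<^sub>R (y - x) - fst v)\<bar>"
      by (simp add: inner_diff_right)
    also have "\<dots> \<le> norm (gr x) * norm (s *\<^sub>R (y - x) - fst v)" by (rule Cauchy_Schwarz_ineq2)
    also have "\<dots> \<le> norm (gr x) * e" using 2 by (intro mult_left_mono) auto
    finally show ?thesis .
  qed
  have 5: "e * (1 + norm (gr x)) \<le> d0 / 4"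
  proof -
    have "e \<le> d0 / (4 * (1 + norm (gr x)))" unfolding e_def by linarith
    then show ?thesis by (simp add: field_simps add_pos_nonneg)
  qed
  have "d0 \<le> \<bar>s * (f y - f x) - snd v\<bar> + \<bar>s * (f y - f x) - s * (gr x \<bullet> (y - x))\<bar> + \<bar>s * (gr x \<bullet> (y - x)) - gr x \<bullet> fst v\<bar>"
    unfolding d0_def by linarith
  also have "\<dots> < e + d0 / 4 + norm (gr x) * e" using 1 3 4 by linarith
  also have "\<dots> \<le> d0 / 2" using 5 by (simp add: algebra_simps)
  finally show False using d0 by linarith
qed

lemma Tan_sup:
  assumes "snd v = gr x \<bullet> fst v"
  shows "v \<in> Tan CC (Fm x)"
  unfolding Tan_def
proof (clarify)
  fix e :: real assume e: "e > 0"
  define u where "u = fst v"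
  have v: "v = (u, gr x \<bullet> u)" using assms by (cases v) (simp add: u_def)
  show "\<exists>p\<in>CC. \<exists>s>0. dist p (Fm x) < e \<and> norm (s *\<^sub>R (p - Fm x) - v) < e"
  proof (cases "u = 0")
    case True
    then show ?thesis using e by (intro bexI[of _ "Fm x"] exI[of _ 1]) (auto simp: v CC_def)
  next
    case False
    then have nu: "norm u > 0" by simp
    define \<epsilon> where "\<epsilon> = e / (2 * norm u)"
    have \<epsilon>: "\<epsilon> > 0" using e nu by (simp add: \<epsilon>_def)
    obtain d where d: "d > 0" "\<And>y. norm (y - x) < d \<Longrightarrow> \<bar>f y - f x - gr x \<bullet> (y - x)\<bar> \<le> \<epsilon> * norm (y - x)"
      using df[of x] \<epsilon> unfolding has_derivative_at_alt f'_gr by (metis real_norm_def)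
    define t where "t = min (d / (2 * norm u)) (e / (2 * (norm u + norm (gr x) * norm u + \<epsilon> * norm u)))"
    have t: "t > 0" using d e nu \<epsilon> by (simp add: t_def add_pos_nonneg)
    define y where "y = x + t *\<^sub>R u"
    have yx: "norm (y - x) = t * norm u" using t by (simp add: y_def)
    have tu: "t * norm u < d"
    proof -
      have "t * norm u \<le> d / (2 * norm u) * norm u" unfolding t_def using nu by (intro mult_right_mono) auto
      also have "\<dots> = d / 2" using nu by simp
      finally show ?thesis using d by linarith
    qed
    have R: "\<bar>f y - f x - t * (gr x \<bullet> u)\<bar> \<le> \<epsilon> * (t * norm u)"
      using d(2)[of y] yx tu t by (simp add: y_def)
    show ?thesis
    proof (intro bexI[of _ "Fm y"] exI[of _ "1/t"] conjI)
      show "1 / t > 0" using t by simp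
      show "Fm y \<in> CC" by (simp add: CC_def)
      have "(1/t) *\<^sub>R (Fm y - Fm x) - v = (0, (f y - f x - t * (gr x \<bullet> u)) / t)"
        using t by (simp add: Fm_def y_def v field_simps)
      then have "norm ((1/t) *\<^sub>R (Fm y - Fm x) - v) = \<bar>f y - f x - t * (gr x \<bullet> u)\<bar> / t"
        using t by (simp add: norm_Pair)
      also have "\<dots> \<le> \<epsilon> * norm u" using R t by (simp add: divide_le_eq mult.commute mult.left_commute)
      also have "\<dots> < e" using nu e by (simp add: \<epsilon>_def)
      finally show "norm ((1/t) *\<^sub>R (Fm y - Fm x) - v) < e" .
      have "dist (Fm y) (Fm x) \<le> norm (y - x) + \<bar>f y - f x\<bar>"
        unfolding Fm_def dist_norm using norm_Pair_le[of "y - x" "f y - f x"] by simp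
      also have "\<bar>f y - f x\<bar> \<le> t * norm (gr x) * norm u + \<epsilon> * (t * norm u)"
      proof -
        have "\<bar>t * (gr x \<bullet> u)\<bar> \<le> t * norm (gr x) * norm u"
          using t Cauchy_Schwarz_ineq2[of "gr x" u] by (simp add: abs_mult)
        then show ?thesis using R by linarith
      qed
      finally have "dist (Fm y) (Fm x) \<le> t * (norm u + norm (gr x) * norm u + \<epsilon> * norm u)"
        using yx by (simp add: algebra_simps)
      also have "\<dots> \<le> e / 2"
      proof -
        have pos: "0 < norm u + norm (gr x) * norm u + \<epsilon> * norm u" using nu \<epsilon> by (simp add: add_pos_nonneg)
        have "t \<le> e / (2 * (norm u + norm (gr x) * norm u + \<epsilon> * norm u))" unfolding t_def by simp
        then show ?thesis using pos by (simp add: field_simps)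
      qed
      finally show "dist (Fm y) (Fm x) < e" using e by linarith
    qed
  qed
qed

lemma Tan_char: "v \<in> Tan CC (Fm x) \<longleftrightarrow> snd v = gr x \<bullet> fst v"
  using Tan_sub Tan_sup by blast

lemma Tan_perp: "v \<in> Tan CC (Fm x) \<longleftrightarrow> v \<bullet> nn x = 0"
  using Tan_char perp_nn by blast

lemma Nor_char: "u \<in> Nor CC (Fm x) \<longleftrightarrow> u = (u \<bullet> nn x) *\<^sub>R nn x"
proof
  assume u: "u \<in> Nor CC (Fm x)"
  obtain a b where ab: "u = (a, b)" by (cases u)
  define w where "w = a + b *\<^sub>R gr x"
  have "(w, gr x \<bullet> w) \<in> Tan CC (Fm x)" by (simp add: Tan_char)
  then have "u \<bullet> (w, gr x \<bullet> w) = 0" using u unfolding Nor_def by blast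
  then have "w \<bullet> w = 0" by (simp add: ab w_def inner_add_left inner_add_right inner_commute algebra_simps)
  then have "a = - b *\<^sub>R gr x" by (simp add: w_def eq_neg_iff_add_eq_0)
  then have "u = (b * W x) *\<^sub>R nn x" using W_pos[of x] by (simp add: ab nn_def)
  then show "u = (u \<bullet> nn x) *\<^sub>R nn x" by (simp add: nn_nn)
next
  assume u: "u = (u \<bullet> nn x) *\<^sub>R nn x"
  show "u \<in> Nor CC (Fm x)" unfolding Nor_def
  proof (clarify)
    fix v assume "v \<in> Tan CC (Fm x)"
    then have "v \<bullet> nn x = 0" by (simp add: Tan_perp)
    then show "u \<bullet> v = 0" by (subst u) (simp add: inner_commute)
  qed
qed

definition DnnL :: "'a \<Rightarrow> 'a \<Rightarrow>\<^sub>L ('a \<times> real)" where "DnnL x = Blinfun (Dnn x)"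
lemma DnnL_apply[simp]: "blinfun_apply (DnnL x) = Dnn x"
  unfolding DnnL_def using Dnn_linear bounded_linear_Blinfun_apply by blast

definition nt :: "'a \<times> real \<Rightarrow> 'a \<times> real" where "nt y = nn (fst y)"
definition DntL :: "'a \<times> real \<Rightarrow> ('a \<times> real) \<Rightarrow>\<^sub>L ('a \<times> real)" where
  "DntL y = DnnL (fst y) o\<^sub>L fst_blinfun"
lemma DntL_apply[simp]: "blinfun_apply (DntL y) w = Dnn (fst y) (fst w)"
  by (simp add: DntL_def)

lemma nt_deriv: "(nt has_derivative blinfun_apply (DntL y)) (at y)"
proof -
  have "((\<lambda>y. nn (fst y)) has_derivative (\<lambda>w. Dnn (fst y) (fst w))) (at y)"
    by (rule has_derivative_compose[OF has_derivative_fst[OF has_derivative_ident] nn_deriv])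
  moreover have "blinfun_apply (DntL y) = (\<lambda>w. Dnn (fst y) (fst w))" by (simp add: fun_eq_iff)
  ultimately show ?thesis unfolding nt_def[abs_def] by simp
qed

lemma cont_DntL: "continuous_on UNIV DntL"
proof (rule continuous_on_blinfun_componentwise)
  fix i :: "'a \<times> real"
  have "continuous_on UNIV (\<lambda>y. Dnn (fst y) (fst i))"
    by (rule continuous_on_compose2[OF cont_Dnn continuous_on_fst[OF continuous_on_id]]) auto
  then show "continuous_on UNIV (\<lambda>y. blinfun_apply (DntL y) i)" by simp
qed

lemma nt_C1: "C1_on_with UNIV nt DntL"
  unfolding C1_on_with_def using nt_deriv cont_DntL by auto

lemma nn_Nor: "nn x \<in> Nor CC (Fm x)"
  by (subst Nor_char) (simp add: nn_nn)

lemma Tan_subspace: "v \<in> Tan CC (Fm x) \<Longrightarrow> w \<in> Tan CC (Fm x) \<Longrightarrow> v + c *\<^sub>R w \<in> Tan CC (Fm x)"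
  by (simp add: Tan_char inner_add_right)

definition b0 :: "'a \<Rightarrow> 'a \<times> real \<Rightarrow> 'a \<times> real \<Rightarrow> 'a \<times> real" where
  "b0 x v w = (if v \<in> Tan CC (Fm x) \<and> w \<in> Tan CC (Fm x) then - (v \<bullet> Dnn x (fst w)) *\<^sub>R nn x else 0)"

lemma b0_is_sff: "is_sff CC (Fm x) (b0 x)"
  unfolding is_sff_def
proof (intro conjI allI impI ballI)
  fix v w assume "v \<notin> Tan CC (Fm x) \<or> w \<notin> Tan CC (Fm x)"
  then show "b0 x v w = 0" by (auto simp: b0_def)
next
  fix v w assume "v \<in> Tan CC (Fm x)" "w \<in> Tan CC (Fm x)"
  then show "b0 x v w \<in> Nor CC (Fm x)" by (subst Nor_char) (simp add: b0_def nn_nn)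
next
  fix v w1 w2 c assume t: "v \<in> Tan CC (Fm x)" "w1 \<in> Tan CC (Fm x)" "w2 \<in> Tan CC (Fm x)"
  then have t2: "w1 + c *\<^sub>R w2 \<in> Tan CC (Fm x)" by (rule_tac Tan_subspace)
  have l: "Dnn x (fst w1 + c *\<^sub>R fst w2) = Dnn x (fst w1) + c *\<^sub>R Dnn x (fst w2)"
    using bounded_linear.linear[OF Dnn_linear[of x]] by (simp add: linear_add linear_scale)
  show "b0 x v (w1 + c *\<^sub>R w2) = b0 x v w1 + c *\<^sub>R b0 x v w2"
    using t t2 l by (simp add: b0_def inner_add_right algebra_simps)
  show "b0 x (w1 + c *\<^sub>R w2) v = b0 x w1 v + c *\<^sub>R b0 x w2 v"
    using t t2 by (simp add: b0_def inner_add_left algebra_simps)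
next
  fix g U G G' v w
  assume g: "class1_on CC g \<and> (\<forall>y\<in>CC. g y \<in> Nor CC y)" and ext: "local_C1_ext CC g (Fm x) U G G'"
    and v: "v \<in> Tan CC (Fm x)" and w: "w \<in> Tan CC (Fm x)"
  have aU: "Fm x \<in> U" and oU: "open U" and GU: "\<And>y. y \<in> U \<Longrightarrow> (G has_derivative blinfun_apply (G' y)) (at y)"
    and Gg: "\<And>y. y \<in> CC \<Longrightarrow> y \<in> U \<Longrightarrow> G y = g y"
    using ext unfolding local_C1_ext_def C1_on_with_def by auto
  define H where "H y = (G y \<bullet> nt y) *\<^sub>R nt y" for y
  define H' where "H' h = (G (Fm x) \<bullet> nt (Fm x)) *\<^sub>R DntL (Fm x) h + ((G (Fm x) \<bullet> DntL (Fm x) h) + (G' (Fm x) h \<bullet> nt (Fm x))) *\<^sub>R nt (Fm x)" for h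
  have Hd: "(H has_derivative H') (at (Fm x))"
    unfolding H_def[abs_def] H'_def[abs_def]
    by (rule derivative_eq_intros GU[OF aU] nt_deriv refl | simp)+
  have Kd: "((\<lambda>y. G y - H y) has_derivative (\<lambda>h. G' (Fm x) h - H' h)) (at (Fm x))"
    by (rule has_derivative_diff[OF GU[OF aU] Hd])
  have "(\<lambda>h. G' (Fm x) h - H' h) w = 0"
  proof (rule deriv_zero_on_Tan[OF Kd oU aU _ _ w])
    show "Fm x \<in> CC" by (simp add: CC_def)
    fix y assume y: "y \<in> CC" "y \<in> U"
    then obtain z where z: "y = Fm z" unfolding CC_def by blast
    have "g y \<in> Nor CC (Fm z)" using g y z by auto
    then have "g y = (g y \<bullet> nn z) *\<^sub>R nn z" by (simp add: Nor_char)
    moreover have "nt y = nn z" by (simp add: nt_def z Fm_def)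
    ultimately show "G y - H y = 0" using Gg[OF y] by (simp add: H_def)
  qed
  then have GH: "G' (Fm x) w = H' w" by simp
  have vn: "v \<bullet> nn x = 0" using v by (simp add: Tan_perp)
  have ntx: "nt (Fm x) = nn x" by (simp add: nt_def Fm_def)
  have gG: "g (Fm x) = G (Fm x)" using Gg[OF _ aU] by (simp add: CC_def)
  have Dx: "blinfun_apply (DntL (Fm x)) w = Dnn x (fst w)" by (simp add: Fm_def)
  have "v \<bullet> blinfun_apply (G' (Fm x)) w = v \<bullet> H' w" by (simp add: GH)
  also have "\<dots> = (G (Fm x) \<bullet> nn x) * (v \<bullet> Dnn x (fst w)) + ((G (Fm x) \<bullet> Dnn x (fst w)) + (G' (Fm x) w \<bullet> nn x)) * (v \<bullet> nn x)"
    unfolding H'_def ntx Dx by (simp add: inner_add_right)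
  also have "\<dots> = (G (Fm x) \<bullet> nn x) * (v \<bullet> Dnn x (fst w))" using vn by simp
  also have "\<dots> = - (g (Fm x) \<bullet> b0 x v w)" using v w by (simp add: b0_def gG)
  finally show "v \<bullet> blinfun_apply (G' (Fm x)) w = - (g (Fm x) \<bullet> b0 x v w)" .
qed

lemma nt_class1: "class1_on CC nt"
  unfolding class1_on_def local_C1_ext_def using nt_C1 by blast

lemma nt_Nor: "\<forall>y\<in>CC. nt y \<in> Nor CC y"
proof
  fix y assume "y \<in> CC"
  then obtain z where z: "y = Fm z" unfolding CC_def by blast
  have "nt y = nn z" by (simp add: z nt_def Fm_def)
  then show "nt y \<in> Nor CC y" using nn_Nor[of z] z by simp
qed

lemma sff_unique: assumes "is_sff CC (Fm x) \<beta>" shows "\<beta> = b0 x"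
proof (intro ext)
  fix v w
  show "\<beta> v w = b0 x v w"
  proof (cases "v \<in> Tan CC (Fm x) \<and> w \<in> Tan CC (Fm x)")
    case False
    then have "\<beta> v w = 0" using assms unfolding is_sff_def by blast
    then show ?thesis using False by (auto simp: b0_def)
  next
    case True
    have N: "\<beta> v w \<in> Nor CC (Fm x)" using assms True unfolding is_sff_def by blast
    have E: "v \<bullet> blinfun_apply (DntL (Fm x)) w = - (nt (Fm x) \<bullet> \<beta> v w)"
      using assms True nt_class1 nt_Nor nt_C1 unfolding is_sff_def local_C1_ext_def by blast
    have ntx: "nt (Fm x) = nn x" by (simp add: nt_def Fm_def)
    have "\<beta> v w = (\<beta> v w \<bullet> nn x) *\<^sub>R nn x" using N by (simp add: Nor_char)
    also have "\<beta> v w \<bullet> nn x = - (v \<bullet> Dnn x (fst w))"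
    proof -
      have "\<beta> v w \<bullet> nn x = nt (Fm x) \<bullet> \<beta> v w" by (simp add: ntx inner_commute)
      also have "\<dots> = - (v \<bullet> blinfun_apply (DntL (Fm x)) w)" using E by simp
      also have "\<dots> = - (v \<bullet> Dnn x (fst w))" by (simp add: Fm_def)
      finally show ?thesis .
    qed
    finally show ?thesis using True by (simp add: b0_def)
  qed
qed

lemma sff_eq: "sff CC (Fm x) = b0 x"
  unfolding sff_def using b0_is_sff sff_unique by (rule the_equality)

end

lemma sign_lemma:
  fixes s :: "real \<Rightarrow> real"
  assumes cont: "continuous_on UNIV s" and s0: "s 0 = 0" and der: "DERIV s 0 :> l" and l: "l > 0"
    and mu: "\<mu> \<noteq> 0" and nz: "\<And>t. 0 < t / \<mu> \<Longrightarrow> t / \<mu> \<le> 1 \<Longrightarrow> s t \<noteq> 0"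
  shows "sgn (s \<mu>) = sgn \<mu>"
proof (cases "\<mu> > 0")
  case True
  obtain \<delta> where \<delta>: "\<delta> > 0" "\<And>h. h > 0 \<Longrightarrow> h < \<delta> \<Longrightarrow> s 0 < s (0 + h)"
    using DERIV_pos_inc_right[OF der l] by blast
  define t0 where "t0 = min (\<delta>/2) (\<mu>/2)"
  have t0: "t0 > 0" "t0 < \<delta>" "t0 \<le> \<mu>" using \<delta> True by (auto simp: t0_def)
  have st0: "s t0 > 0" using \<delta>(2)[OF t0(1,2)] s0 by simp
  have smu: "s \<mu> \<noteq> 0" using nz[of \<mu>] True by simp
  have "s \<mu> > 0"
  proof (rule ccontr)
    assume "\<not> s \<mu> > 0"
    then have "s \<mu> \<le> 0" by simp
    then obtain x where x: "t0 \<le> x" "x \<le> \<mu>" "s x = 0"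
      using IVT2'[of s \<mu> 0 t0] st0 t0 continuous_on_subset[OF cont] by force
    have "0 < x / \<mu>" "x / \<mu> \<le> 1" using x t0 True by (auto simp: divide_le_eq)
    then show False using nz x(3) by blast
  qed
  then show ?thesis using True by simp
next
  case False
  then have neg: "\<mu> < 0" using mu by simp
  obtain \<delta> where \<delta>: "\<delta> > 0" "\<And>h. h > 0 \<Longrightarrow> h < \<delta> \<Longrightarrow> s (0 - h) < s 0"
    using DERIV_pos_inc_left[OF der l] by blast
  define h0 where "h0 = min (\<delta>/2) (- \<mu>/2)"
  have h0: "h0 > 0" "h0 < \<delta>" "h0 \<le> - \<mu>" using \<delta> neg by (auto simp: h0_def)
  have st0: "s (- h0) < 0" using \<delta>(2)[OF h0(1,2)] s0 by simp
  have smu: "s \<mu> \<noteq> 0" using nz[of \<mu>] neg by simp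
  have "s \<mu> < 0"
  proof (rule ccontr)
    assume "\<not> s \<mu> < 0"
    then have "s \<mu> \<ge> 0" by simp
    then obtain x where x: "\<mu> \<le> x" "x \<le> - h0" "s x = 0"
      using IVT2'[of s "- h0" 0 \<mu>] st0 h0 continuous_on_subset[OF cont] by force
    have "0 < x / \<mu>" "x / \<mu> \<le> 1" using x h0 neg by (auto simp: divide_le_eq zero_less_divide_iff)
    then show False using nz x(3) by blast
  qed
  then show ?thesis using neg by simp
qed

context graphC2
begin

lemma Dnn_0: "Dnn x 0 = 0" using bounded_linear.linear[OF Dnn_linear[of x]] linear_0 by blast

lemma b0_le_sff_norm:
  assumes "v \<in> Tan CC (Fm x)" "w \<in> Tan CC (Fm x)" "norm v \<le> 1" "norm w \<le> 1"
  shows "\<bar>v \<bullet> Dnn x (fst w)\<bar> \<le> sff_norm CC (Fm x)"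
proof -
  define S where "S = {(v,w). v \<in> Tan CC (Fm x) \<and> w \<in> Tan CC (Fm x) \<and> norm v \<le> 1 \<and> norm w \<le> 1}"
  have bnd: "norm (b0 x (fst p) (snd p)) \<le> norm (DnnL x)" if "p \<in> S" for p
  proof -
    obtain v w where p0: "p = (v, w)" by (cases p)
    have p: "p = (v, w)" "norm v \<le> 1" "norm w \<le> 1" using that p0 unfolding S_def by simp_all
    have "norm (b0 x v w) \<le> \<bar>v \<bullet> Dnn x (fst w)\<bar>" by (simp add: b0_def norm_nn)
    also have "\<dots> \<le> norm v * norm (Dnn x (fst w))" by (rule Cauchy_Schwarz_ineq2)
    also have "\<dots> \<le> 1 * (norm (DnnL x) * norm (fst w))"
      using p norm_blinfun[of "DnnL x" "fst w"] by (intro mult_mono) auto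
    also have "\<dots> \<le> norm (DnnL x) * 1"
    proof -
      have fw: "norm (fst w) \<le> 1" using p(3) norm_fst_le[where x="fst w" and y="snd w"] by simp
      show ?thesis using mult_left_le[OF fw norm_ge_zero[of "DnnL x"]] by simp
    qed
    finally show ?thesis using p by simp
  qed
  have "bdd_above ((\<lambda>p. norm (b0 x (fst p) (snd p))) ` S)"
    using bnd by (intro bdd_aboveI2) auto
  moreover have "(v, w) \<in> S" using assms by (simp add: S_def)
  ultimately have "norm (b0 x v w) \<le> (SUP p\<in>S. norm (b0 x (fst p) (snd p)))"
    by (metis (no_types, lifting) cSUP_upper fst_conv snd_conv)
  also have "\<dots> = sff_norm CC (Fm x)" unfolding sff_norm_def sff_eq S_def ..
  finally show ?thesis using assms by (simp add: b0_def norm_nn)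
qed

lemma curv_bound:
  assumes \<kappa>: "sff_norm CC (Fm x) \<le> \<kappa>" and U: "snd U = gr x \<bullet> fst U"
  shows "\<bar>U \<bullet> Dnn x (fst U)\<bar> \<le> \<kappa> * (norm U)^2"
proof (cases "U = 0")
  case True
  have "0 \<le> sff_norm CC (Fm x)" using b0_le_sff_norm[of 0 x 0] by (simp add: Tan_char)
  then show ?thesis using True \<kappa> by (simp add: Dnn_0)
next
  case False
  then have nU: "norm U > 0" by simp
  define V where "V = inverse (norm U) *\<^sub>R U"
  have VT: "V \<in> Tan CC (Fm x)" using U by (simp add: V_def Tan_char inner_scaleR_right)
  have nV: "norm V = 1" using nU by (simp add: V_def)
  have linD: "linear (Dnn x)" using bounded_linear.linear[OF Dnn_linear[of x]] .
  have e1: "V \<bullet> Dnn x (fst V) = (inverse (norm U) * inverse (norm U)) * (U \<bullet> Dnn x (fst U))"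
    unfolding V_def fst_scaleR linear_scale[OF linD] inner_scaleR_left inner_scaleR_right by simp
  have "\<bar>V \<bullet> Dnn x (fst V)\<bar> = \<bar>U \<bullet> Dnn x (fst U)\<bar> / (norm U)^2"
    unfolding e1 using nU by (simp add: abs_mult power2_eq_square divide_inverse)
  moreover have "\<bar>V \<bullet> Dnn x (fst V)\<bar> \<le> \<kappa>" using b0_le_sff_norm[OF VT VT] nV \<kappa> by simp
  ultimately show ?thesis using nU by (simp add: divide_le_eq mult.commute)
qed

definition psi :: "real \<Rightarrow> 'a \<Rightarrow> 'a" where "psi l x = x + l *\<^sub>R fst (nn x)"
definition DpsiL :: "real \<Rightarrow> 'a \<Rightarrow> 'a \<Rightarrow>\<^sub>L 'a" where
  "DpsiL l x = id_blinfun + l *\<^sub>R (fst_blinfun o\<^sub>L DnnL x)"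
lemma DpsiL_apply: "blinfun_apply (DpsiL l x) h = h + l *\<^sub>R fst (Dnn x h)"
  by (simp add: DpsiL_def blinfun.add_left blinfun.scaleR_left)

lemma psi_deriv: "(psi l has_derivative blinfun_apply (DpsiL l x)) (at x)"
proof -
  have "(psi l has_derivative (\<lambda>h. h + l *\<^sub>R fst (Dnn x h))) (at x)"
    unfolding psi_def[abs_def]
    by (intro has_derivative_add has_derivative_ident has_derivative_scaleR_right has_derivative_fst[OF nn_deriv])
  moreover have "blinfun_apply (DpsiL l x) = (\<lambda>h. h + l *\<^sub>R fst (Dnn x h))" by (simp add: fun_eq_iff DpsiL_apply)
  ultimately show ?thesis by simp
qed

lemma cont_DpsiL: "continuous_on UNIV (DpsiL l)"
proof (rule continuous_on_blinfun_componentwise)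
  fix i :: 'a
  have "continuous_on UNIV (\<lambda>x. i + l *\<^sub>R fst (Dnn x i))"
    by (intro continuous_intros cont_Dnn)
  then show "continuous_on UNIV (\<lambda>x. blinfun_apply (DpsiL l x) i)" by (simp add: DpsiL_apply)
qed

lemma psi_disp: "norm (psi l x - x) \<le> \<bar>l\<bar>"
proof -
  have "norm (psi l x - x) = \<bar>l\<bar> * norm (fst (nn x))" by (simp add: psi_def)
  also have "\<dots> \<le> \<bar>l\<bar> * 1"
    using norm_fst_le[where x="fst (nn x)" and y="snd (nn x)"] norm_nn[of x] by (intro mult_left_mono) auto
  finally show ?thesis by simp
qed

lemma Dpsi_inj:
  assumes \<kappa>: "\<And>x. sff_norm CC (Fm x) \<le> \<kappa>" and l: "\<bar>l\<bar> * \<kappa> < 1"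
  shows "inj (blinfun_apply (DpsiL l x))"
proof -
  have lin: "linear (blinfun_apply (DpsiL l x))" by (rule bounded_linear.linear[OF blinfun.bounded_linear_right])
  have "h = 0" if h: "blinfun_apply (DpsiL l x) h = 0" for h
  proof (cases "l = 0")
    case True then show ?thesis using h by (simp add: DpsiL_apply)
  next
    case False
    define D where "D = Dnn x h"
    define U where "U = (h, gr x \<bullet> h)"
    have h1: "h + l *\<^sub>R fst D = 0" using h by (simp add: DpsiL_apply D_def)
    have "fst D = inverse l *\<^sub>R (l *\<^sub>R fst D)" using False by simp
    also have "l *\<^sub>R fst D = - h" using h1 by (simp add: add_eq_0_iff)
    finally have fD: "fst D = - inverse l *\<^sub>R h" by simp
    have "D \<bullet> nn x = 0" using nn_Dnn[of x h] by (simp add: D_def inner_commute)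
    then have sD: "snd D = gr x \<bullet> fst D" by (simp add: perp_nn)
    have DU: "D = - inverse l *\<^sub>R U"
      using fD sD by (cases D) (simp add: U_def inner_scaleR_right)
    have "\<bar>U \<bullet> Dnn x (fst U)\<bar> \<le> \<kappa> * (norm U)^2" by (rule curv_bound[OF \<kappa>]) (simp add: U_def)
    moreover have "U \<bullet> Dnn x (fst U) = - inverse l * (norm U)^2"
      using DU by (simp add: U_def D_def[symmetric] power2_norm_eq_inner algebra_simps)
    ultimately have "inverse \<bar>l\<bar> * (norm U)^2 \<le> \<kappa> * (norm U)^2" by (simp add: abs_mult)
    moreover have "\<kappa> < inverse \<bar>l\<bar>" using l False by (simp add: field_simps mult.commute)
    ultimately have "(norm U)^2 \<le> 0"
    proof -
      assume A: "inverse \<bar>l\<bar> * (norm U)^2 \<le> \<kappa> * (norm U)^2" and B: "\<kappa> < inverse \<bar>l\<bar>"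
      show ?thesis
      proof (rule ccontr)
        assume "\<not> (norm U)^2 \<le> 0"
        then have "0 < (norm U)^2" by simp
        then have "\<kappa> * (norm U)^2 < inverse \<bar>l\<bar> * (norm U)^2" using B by (rule mult_strict_right_mono[rotated])
        then show False using A by linarith
      qed
    qed
    then have "U = 0" by simp
    then show "h = 0" by (simp add: U_def zero_prod_def)
  qed
  then show ?thesis using lin by (simp add: linear_inj_iff_eq_0)
qed

lemma psi_local_homeo:
  assumes \<kappa>: "\<And>x. sff_norm CC (Fm x) \<le> \<kappa>" and l: "\<bar>l\<bar> * \<kappa> < 1"
  shows "\<exists>U V g. open U \<and> x \<in> U \<and> open V \<and> homeomorphism U V (psi l) g"
proof -
  have lin: "linear (blinfun_apply (DpsiL l x))" by (rule bounded_linear.linear[OF blinfun.bounded_linear_right])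
  obtain g where g: "linear g" "g \<circ> blinfun_apply (DpsiL l x) = id"
    using linear_injective_left_inverse[OF lin Dpsi_inj[OF \<kappa> l]] by blast
  have "bounded_linear g" using g(1) by (simp add: linear_conv_bounded_linear)
  then have "Blinfun g o\<^sub>L DpsiL l x = id_blinfun"
    using g(2) by (intro blinfun_eqI) (simp add: bounded_linear_Blinfun_apply pointfree_idE)
  then obtain U V h where "open U" "U \<subseteq> UNIV" "x \<in> U" "open V" "psi l x \<in> V" "homeomorphism U V (psi l) h"
    using inverse_function_theorem[OF open_UNIV psi_deriv cont_DpsiL UNIV_I] by metis
  then show ?thesis by blast
qed

lemma psi_inj:
  assumes \<kappa>: "\<And>x. sff_norm CC (Fm x) \<le> \<kappa>" and l: "\<bar>l\<bar> * \<kappa> < 1"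
  shows "inj (psi l)"
  by (rule local_homeo_bounded_disp_inj[OF psi_local_homeo[OF \<kappa> l] psi_disp])

lemma cont_f: "continuous_on UNIV f"
proof (rule continuous_at_imp_continuous_on, rule ballI)
  fix x :: 'a show "isCont f x" by (rule has_derivative_continuous[OF df])
qed

lemma CC_eq: "CC = {p. snd p = f (fst p)}"
  unfolding CC_def Fm_def by (auto intro: range_eqI[where x="fst _"])

lemma CC_closed: "closed CC"
  unfolding CC_eq
  by (rule closed_Collect_eq) (auto intro!: continuous_intros continuous_on_compose2[OF cont_f])

lemma nearest_exists: "\<exists>c\<in>CC. dist z c = infdist z CC"
proof -
  have ne: "CC \<noteq> {}" by (simp add: CC_def)
  obtain c where c: "c \<in> CC" "\<And>y. y \<in> CC \<Longrightarrow> dist z c \<le> dist z y"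
    using distance_attains_inf[OF CC_closed ne] by blast
  have "infdist z CC = (INF a\<in>CC. dist z a)" using ne by (rule infdist_notempty)
  also have "\<dots> \<ge> dist z c" using ne c by (intro cINF_greatest) auto
  finally have "dist z c \<le> infdist z CC" .
  moreover have "infdist z CC \<le> dist z c" by (rule infdist_le[OF c(1)])
  ultimately show ?thesis using c(1) by (intro bexI[of _ c]) auto
qed

lemma Fm_deriv: "(Fm has_derivative (\<lambda>h. (h, gr x \<bullet> h))) (at x)"
proof -
  have "(Fm has_derivative (\<lambda>h. (h, blinfun_apply (f' x) h))) (at x)"
    unfolding Fm_def[abs_def] by (intro has_derivative_Pair has_derivative_ident df)
  then show ?thesis by (simp add: f'_gr)
qed

lemma first_order:
  assumes c: "\<And>y. y \<in> CC \<Longrightarrow> dist z (Fm x0) \<le> dist z y"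
  shows "z - Fm x0 = ((z - Fm x0) \<bullet> nn x0) *\<^sub>R nn x0"
proof -
  define \<phi> where "\<phi> x = (Fm x - z) \<bullet> (Fm x - z)" for x
  have d: "(\<phi> has_derivative (\<lambda>h. (Fm x0 - z) \<bullet> (h, gr x0 \<bullet> h) + (h, gr x0 \<bullet> h) \<bullet> (Fm x0 - z))) (at x0)"
  proof -
    have d1: "((\<lambda>x. Fm x - z) has_derivative (\<lambda>h. (h, gr x0 \<bullet> h))) (at x0)"
      using has_derivative_diff[OF Fm_deriv[of x0] has_derivative_const[where c=z]] by simp
    show ?thesis unfolding \<phi>_def[abs_def] by (rule has_derivative_inner[OF d1 d1])
  qed
  have mn: "\<forall>y\<in>UNIV. \<phi> x0 \<le> \<phi> y"
  proof
    fix y :: 'a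
    have "dist z (Fm x0) \<le> dist z (Fm y)" using c by (simp add: CC_def)
    then have "(dist z (Fm x0))^2 \<le> (dist z (Fm y))^2" by (simp add: power_mono)
    then show "\<phi> x0 \<le> \<phi> y" unfolding \<phi>_def dot_square_norm dist_norm by (simp add: norm_minus_commute)
  qed
  have "(\<lambda>h. (Fm x0 - z) \<bullet> (h, gr x0 \<bullet> h) + (h, gr x0 \<bullet> h) \<bullet> (Fm x0 - z)) = (\<lambda>h. 0)"
    using differential_zero_maxmin[OF UNIV_I open_UNIV d] mn by blast
  then have zz: "(z - Fm x0) \<bullet> (h, gr x0 \<bullet> h) = 0" for h
    by (drule_tac fun_cong[of _ _ h]) (simp add: inner_commute inner_diff_left)
  have "z - Fm x0 \<in> Nor CC (Fm x0)"
    unfolding Nor_def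
  proof (clarify)
    fix v assume "v \<in> Tan CC (Fm x0)"
    then have "v = (fst v, gr x0 \<bullet> fst v)" by (cases v) (simp add: Tan_char)
    then show "(z - Fm x0) \<bullet> v = 0" using zz[of "fst v"] by metis
  qed
  then show ?thesis by (simp add: Nor_char)
qed

lemma s_deriv: "((\<lambda>t. snd (Fm x0 + t *\<^sub>R nn x0) - f (fst (Fm x0 + t *\<^sub>R nn x0))) has_real_derivative W x0) (at 0)"
proof -
  have 1: "((\<lambda>t. x0 + t *\<^sub>R fst (nn x0)) has_derivative (\<lambda>t. t *\<^sub>R fst (nn x0))) (at 0)"
    by (intro derivative_eq_intros) auto
  have 2: "((\<lambda>t. f (x0 + t *\<^sub>R fst (nn x0))) has_derivative (\<lambda>t. blinfun_apply (f' x0) (t *\<^sub>R fst (nn x0)))) (at 0)"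
    using has_derivative_compose[OF 1, of f] df[of x0] by simp
  have 3: "((\<lambda>t. f x0 + t * snd (nn x0) - f (x0 + t *\<^sub>R fst (nn x0))) has_derivative
      (\<lambda>t. t * snd (nn x0) - blinfun_apply (f' x0) (t *\<^sub>R fst (nn x0)))) (at 0)"
    by (intro has_derivative_diff has_derivative_add has_derivative_const 2 has_derivative_mult_left[OF has_derivative_ident, simplified]) 
      (auto intro!: derivative_eq_intros)
  have eq: "(\<lambda>t. t * snd (nn x0) - blinfun_apply (f' x0) (t *\<^sub>R fst (nn x0))) = (\<lambda>t. t * W x0)"
  proof
    fix t
    have "t * snd (nn x0) - blinfun_apply (f' x0) (t *\<^sub>R fst (nn x0)) = t * (inverse (W x0) * (1 + gr x0 \<bullet> gr x0))"
      by (simp add: f'_gr snd_nn fst_nn algebra_simps)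
    also have "\<dots> = t * W x0"
    proof -
      have "1 + gr x0 \<bullet> gr x0 = W x0 * W x0" using W_sq[of x0] by (simp add: power2_eq_square)
      then show ?thesis using W_nz[of x0] by simp
    qed
    finally show "t * snd (nn x0) - blinfun_apply (f' x0) (t *\<^sub>R fst (nn x0)) = t * W x0" .
  qed
  have 4: "((\<lambda>t. f x0 + t * snd (nn x0) - f (x0 + t *\<^sub>R fst (nn x0))) has_derivative (\<lambda>t. W x0 * t)) (at 0)"
    using 3 unfolding eq by (simp add: mult.commute)
  then show ?thesis unfolding has_field_derivative_def by (simp add: Fm_def)
qed

lemma sign_side:
  assumes c: "\<And>y. y \<in> CC \<Longrightarrow> dist z (Fm x0) \<le> dist z y" and zC: "z \<notin> CC"
    and mu: "\<mu> = (z - Fm x0) \<bullet> nn x0"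
  shows "sgn (snd z - f (fst z)) = sgn \<mu>" and "\<bar>\<mu>\<bar> = dist z (Fm x0)" and "\<mu> \<noteq> 0"
proof -
  have z: "z = Fm x0 + \<mu> *\<^sub>R nn x0" using first_order[OF c] mu by (metis add.commute diff_add_cancel)
  show dmu: "\<bar>\<mu>\<bar> = dist z (Fm x0)" by (subst z) (simp add: dist_norm norm_nn)
  show mu0: "\<mu> \<noteq> 0" using zC z by (auto simp: CC_def)
  define s where "s t = snd (Fm x0 + t *\<^sub>R nn x0) - f (fst (Fm x0 + t *\<^sub>R nn x0))" for t
  have cs: "continuous_on UNIV s" unfolding s_def
    by (intro continuous_intros continuous_on_compose2[OF cont_f]) auto
  have "sgn (s \<mu>) = sgn \<mu>"
  proof (rule sign_lemma[OF cs _ _ W_pos mu0])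
    show "s 0 = 0" by (simp add: s_def Fm_def)
    show "DERIV s 0 :> W x0" unfolding s_def[abs_def] by (rule s_deriv)
    fix t assume t: "0 < t / \<mu>" "t / \<mu> \<le> 1"
    show "s t \<noteq> 0"
    proof
      assume "s t = 0"
      then have "Fm x0 + t *\<^sub>R nn x0 \<in> CC" by (simp add: s_def CC_eq)
      then have le: "dist z (Fm x0) \<le> dist z (Fm x0 + t *\<^sub>R nn x0)" by (rule c)
      have "dist z (Fm x0 + t *\<^sub>R nn x0) = \<bar>\<mu> - t\<bar>"
        by (subst z) (simp add: dist_norm norm_nn algebra_simps flip: scaleR_diff_left)
      moreover have "\<bar>\<mu> - t\<bar> < \<bar>\<mu>\<bar>"
      proof (cases "\<mu> > 0")
        case True then show ?thesis using t by (auto simp: divide_le_eq zero_less_divide_iff)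
      next
        case False then show ?thesis using t mu0 by (auto simp: divide_le_eq zero_less_divide_iff)
      qed
      ultimately show False using le dmu by linarith
    qed
  qed
  moreover have "s \<mu> = snd z - f (fst z)" by (simp add: s_def z)
  ultimately show "sgn (snd z - f (fst z)) = sgn \<mu>" by simp
qed

end

lemma sgn_abs_eq: "sgn (a::real) = sgn b \<Longrightarrow> \<bar>a\<bar> = \<bar>b\<bar> \<Longrightarrow> a = b"
  by (metis sgn_mult_abs)

theorem mainTheorem3:
  fixes f :: "'a::euclidean_space \<Rightarrow> real"
    and F :: "'a \<Rightarrow> 'a \<times> real"
    and C :: "('a \<times> real) set"
    and r :: ereal
  assumes f_C2: "class2 f"
    and F_def: "\<And>x. F x = (x, f x)"
    and C_def: "C = range F"
    and r_pos: "0 < r"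
    and sff_bound: "\<And>c. c \<in> C \<Longrightarrow> ereal (sff_norm C c) \<le> inverse r"
  shows "\<And>z. ereal (infdist z C) < r \<Longrightarrow>
           (\<exists>!c. c \<in> C \<and> dist z c = infdist z C) \<and>
           (\<forall>c. c \<in> C \<and> dist z c = infdist z C \<longrightarrow>
                 sgn (snd (z - c)) = sgn (snd z - f (fst z)))"
proof -
  obtain f' f'' where d1: "\<And>x. (f has_derivative blinfun_apply (f' x)) (at x)"
    and d2: "\<And>x. (f' has_derivative blinfun_apply (f'' x)) (at x)" and c2: "continuous_on UNIV f''"
    using f_C2 unfolding class2_def by blast
  interpret g: graphC2 f f' f'' using d1 d2 c2 by unfold_locales auto
  have FF: "F = g.Fm" by (simp add: fun_eq_iff F_def g.Fm_def)
  have CCe: "C = g.CC" by (simp add: C_def FF g.CC_def)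
  obtain \<kappa> where \<kappa>: "inverse r = ereal \<kappa>" "0 \<le> \<kappa>"
    using r_pos by (cases r) auto
  have bnd: "sff_norm g.CC (g.Fm x) \<le> \<kappa>" for x
    using sff_bound[of "g.Fm x"] \<kappa> by (simp add: CCe g.CC_def)
  show "\<And>z. ereal (infdist z C) < r \<Longrightarrow>
           (\<exists>!c. c \<in> C \<and> dist z c = infdist z C) \<and>
           (\<forall>c. c \<in> C \<and> dist z c = infdist z C \<longrightarrow>
                 sgn (snd (z - c)) = sgn (snd z - f (fst z)))"
  proof -
    fix z assume hz: "ereal (infdist z C) < r"
    define d where "d = infdist z g.CC"
    have d0: "0 \<le> d" by (simp add: d_def infdist_nonneg)
    have dk: "d * \<kappa> < 1"
    proof (cases r)
      case (real x)
      then have "d < x" "x > 0" using hz r_pos by (auto simp: d_def CCe)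
      moreover have "\<kappa> = inverse x" using \<kappa>(1) real \<open>x > 0\<close> by simp
      ultimately have dx: "d < x" "x > 0" and kx: "\<kappa> = inverse x" by auto
      have "d * inverse x < x * inverse x" by (rule mult_strict_right_mono) (use dx in auto)
      then show ?thesis using dx kx by simp
    next
      case PInf
      then have "\<kappa> = 0" using \<kappa>(1) by simp
      then show ?thesis by simp
    next
      case MInf then show ?thesis using r_pos by simp
    qed
    have near: "\<And>y. y \<in> g.CC \<Longrightarrow> dist z c \<le> dist z y" if "c \<in> g.CC" "dist z c = d" for c
      using that infdist_le by (metis d_def)
    obtain c0 where c0: "c0 \<in> g.CC" "dist z c0 = d" using g.nearest_exists d_def by blast
    show "(\<exists>!c. c \<in> C \<and> dist z c = infdist z C) \<and>
           (\<forall>c. c \<in> C \<and> dist z c = infdist z C \<longrightarrow>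
                 sgn (snd (z - c)) = sgn (snd z - f (fst z)))"
    proof (cases "z \<in> g.CC")
      case True
      then have "d = 0" by (simp add: d_def)
      then have eqz: "c = z" if "dist z c = d" for c using that by simp
      have z0: "snd z - f (fst z) = 0" using True by (simp add: g.CC_eq)
      have A: "\<exists>!c. c \<in> g.CC \<and> dist z c = d"
        using c0 eqz by blast
      have B: "\<forall>c. c \<in> g.CC \<and> dist z c = d \<longrightarrow> sgn (snd (z - c)) = sgn (snd z - f (fst z))"
      proof (intro allI impI)
        fix c assume "c \<in> g.CC \<and> dist z c = d"
        then have "c = z" using eqz by blast
        then show "sgn (snd (z - c)) = sgn (snd z - f (fst z))" using z0 by simp
      qed
      show ?thesis unfolding CCe d_def[symmetric] using A B by blast
    next
      case False
      have key: "\<exists>x \<mu>. c = g.Fm x \<and> z = g.Fm x + \<mu> *\<^sub>R g.nn x \<and> sgn (snd z - f (fst z)) = sgn \<mu> \<and> \<bar>\<mu>\<bar> = d"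
        if cc: "c \<in> g.CC" "dist z c = d" for c
      proof -
        obtain x where x: "c = g.Fm x" using cc(1) unfolding g.CC_def by blast
        define \<mu> where "\<mu> = (z - g.Fm x) \<bullet> g.nn x"
        have nc: "\<And>y. y \<in> g.CC \<Longrightarrow> dist z (g.Fm x) \<le> dist z y" using near[OF cc] x by simp
        have "z = g.Fm x + \<mu> *\<^sub>R g.nn x" using g.first_order[OF nc] \<mu>_def by (metis add.commute diff_add_cancel)
        moreover have "sgn (snd z - f (fst z)) = sgn \<mu>" "\<bar>\<mu>\<bar> = dist z (g.Fm x)"
          using g.sign_side[OF nc False \<mu>_def] by auto
        ultimately show ?thesis using x cc(2) by blast
      qed
      have uniq: "c1 = c2" if cs: "c1 \<in> g.CC" "dist z c1 = d" "c2 \<in> g.CC" "dist z c2 = d" for c1 c2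
      proof -
        obtain x1 \<mu>1 where 1: "c1 = g.Fm x1" "z = g.Fm x1 + \<mu>1 *\<^sub>R g.nn x1" "sgn (snd z - f (fst z)) = sgn \<mu>1" "\<bar>\<mu>1\<bar> = d"
          using key[OF cs(1,2)] by blast
        obtain x2 \<mu>2 where 2: "c2 = g.Fm x2" "z = g.Fm x2 + \<mu>2 *\<^sub>R g.nn x2" "sgn (snd z - f (fst z)) = sgn \<mu>2" "\<bar>\<mu>2\<bar> = d"
          using key[OF cs(3,4)] by blast
        have m: "\<mu>1 = \<mu>2"
        proof (rule sgn_abs_eq)
          show "sgn \<mu>1 = sgn \<mu>2" using 1(3) 2(3) by simp
          show "\<bar>\<mu>1\<bar> = \<bar>\<mu>2\<bar>" using 1(4) 2(4) by simp
        qed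
        have "g.psi \<mu>1 x1 = fst z" using 1(2) by (simp add: g.psi_def g.Fm_def)
        moreover have "g.psi \<mu>1 x2 = fst z" using 2(2) m by (simp add: g.psi_def g.Fm_def)
        moreover have "inj (g.psi \<mu>1)" using g.psi_inj[OF bnd] dk 1(4) by (simp add: mult.commute)
        ultimately have "x1 = x2" by (metis injD)
        then show ?thesis using 1(1) 2(1) by simp
      qed
      have sgnc: "sgn (snd (z - c)) = sgn (snd z - f (fst z))" if cs: "c \<in> g.CC" "dist z c = d" for c
      proof -
        obtain x \<mu> where 1: "c = g.Fm x" "z = g.Fm x + \<mu> *\<^sub>R g.nn x" "sgn (snd z - f (fst z)) = sgn \<mu>"
          using key[OF cs] by blast
        have "snd (z - c) = \<mu> * inverse (g.W x)" using 1(1,2) by (simp add: g.snd_nn)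
        then have "sgn (snd (z - c)) = sgn \<mu>" using g.W_pos[of x] by (simp add: sgn_mult)
        then show ?thesis using 1(3) by simp
      qed
      show ?thesis unfolding CCe d_def[symmetric]
        using c0 uniq sgnc by blast
    qed
  qed
qed

end
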